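(* Let $H\le G$ be finite groups, $Y$ an irreducible unitary representation of $H$, and $Y^{\uparrow}=\bigoplus_t t\otimes Y$ the induced unitary representation ($t$ ranging over left coset representatives of $H$). Let $V\neq0$ be a $G$-subrepresentation of $Y^{\uparrow}$ and $E$ the orthogonal projection onto $e\otimes Y\subseteq Y^{\uparrow}$. Then there exists a unit vector $\psi\in V$ with $$\langle\psi|E\psi\rangle=\frac{\dim V}{\dim Y^{\uparrow}}.$$
   Context: $Y^{\uparrow}=\mathbb{C}G\otimes_{\mathbb{C}H}Y$, equipped with the inner product for which the subspaces $t\otimes Y$ are pairwise orthogonal and each carries the inner product of $Y$; with it $Y^{\uparrow}$ is a unitary representation of $G$. *)

theory Defs
  imports "HOL-Algebra.Group" "HOL-Algebra.Coset" "HOL-Library.Function_Algebras" Complex_Main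
begin

text \<open>The representation space Y of H is modelled as C^n, i.e. functions 'n => complex
  for a finite index type 'n (so dim Y = CARD('n) >= 1), with the standard Hermitian
  inner product (conjugate-linear in the first argument).\<close>

definition cscale :: "complex \<Rightarrow> ('n \<Rightarrow> complex) \<Rightarrow> ('n \<Rightarrow> complex)" where
  "cscale c y = (\<lambda>i. c * y i)"

definition cinner :: "('n::finite \<Rightarrow> complex) \<Rightarrow> ('n \<Rightarrow> complex) \<Rightarrow> complex" where
  "cinner x y = (\<Sum>i\<in>UNIV. cnj (x i) * y i)"

definition unitary_rep ::
  "('g, 'b) monoid_scheme \<Rightarrow> 'g set \<Rightarrow> ('g \<Rightarrow> ('n::finite \<Rightarrow> complex) \<Rightarrow> ('n \<Rightarrow> complex)) \<Rightarrow> bool" where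
  "unitary_rep G H \<rho> \<longleftrightarrow>
     (\<forall>h\<in>H. Vector_Spaces.linear cscale cscale (\<rho> h)) \<and>
     (\<forall>h\<in>H. \<forall>x y. cinner (\<rho> h x) (\<rho> h y) = cinner x y) \<and>
     (\<forall>h1\<in>H. \<forall>h2\<in>H. \<rho> (h1 \<otimes>\<^bsub>G\<^esub> h2) = \<rho> h1 \<circ> \<rho> h2)"

definition irreducible_rep ::
  "'g set \<Rightarrow> ('g \<Rightarrow> ('n::finite \<Rightarrow> complex) \<Rightarrow> ('n \<Rightarrow> complex)) \<Rightarrow> bool" where
  "irreducible_rep H \<rho> \<longleftrightarrow>
     (\<forall>W. module.subspace cscale W \<and> (\<forall>h\<in>H. \<forall>y\<in>W. \<rho> h y \<in> W)
          \<longrightarrow> W = {0} \<or> W = UNIV)"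

definition left_transversal :: "('g, 'b) monoid_scheme \<Rightarrow> 'g set \<Rightarrow> 'g set \<Rightarrow> bool" where
  "left_transversal G H T \<longleftrightarrow>
     T \<subseteq> carrier G \<and> (\<forall>g\<in>carrier G. \<exists>!t. t \<in> T \<and> inv\<^bsub>G\<^esub> t \<otimes>\<^bsub>G\<^esub> g \<in> H)"

text \<open>The induced space Y^up = (+)_{t in T} t (x) Y, modelled as functions T -> Y
  (extended by 0 outside T); f corresponds to sum_t t (x) f t.\<close>
definition ind_space :: "'g set \<Rightarrow> ('g \<Rightarrow> 'n \<Rightarrow> complex) set" where
  "ind_space T = {f. \<forall>t. t \<notin> T \<longrightarrow> f t = 0}"

definition ind_scale :: "complex \<Rightarrow> ('g \<Rightarrow> 'n \<Rightarrow> complex) \<Rightarrow> ('g \<Rightarrow> 'n \<Rightarrow> complex)" where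
  "ind_scale c f = (\<lambda>t. cscale c (f t))"

definition ind_inner :: "'g set \<Rightarrow> ('g \<Rightarrow> 'n::finite \<Rightarrow> complex) \<Rightarrow> ('g \<Rightarrow> 'n \<Rightarrow> complex) \<Rightarrow> complex" where
  "ind_inner T f f' = (\<Sum>t\<in>T. cinner (f t) (f' t))"

text \<open>Action of g on Y^up: g (t (x) y) = s (x) rho(h) y where g t = s h, s in T, h in H.\<close>
definition ind_action ::
  "('g, 'b) monoid_scheme \<Rightarrow> 'g set \<Rightarrow> ('g \<Rightarrow> ('n \<Rightarrow> complex) \<Rightarrow> ('n \<Rightarrow> complex)) \<Rightarrow> 'g set
   \<Rightarrow> 'g \<Rightarrow> ('g \<Rightarrow> 'n \<Rightarrow> complex) \<Rightarrow> ('g \<Rightarrow> 'n \<Rightarrow> complex)" where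
  "ind_action G H \<rho> T g f =
     (\<lambda>s. if s \<in> T then
            (\<Sum>t\<in>T. if inv\<^bsub>G\<^esub> s \<otimes>\<^bsub>G\<^esub> g \<otimes>\<^bsub>G\<^esub> t \<in> H
                     then \<rho> (inv\<^bsub>G\<^esub> s \<otimes>\<^bsub>G\<^esub> g \<otimes>\<^bsub>G\<^esub> t) (f t) else 0)
          else 0)"

text \<open>Orthogonal projection onto e (x) Y: keep only the summand of the representative of the
  coset H (the unique element of T lying in H), zero out the others.\<close>
definition ind_proj :: "'g set \<Rightarrow> ('g \<Rightarrow> 'n \<Rightarrow> complex) \<Rightarrow> ('g \<Rightarrow> 'n \<Rightarrow> complex)" where
  "ind_proj H f = (\<lambda>t. if t \<in> H then f t else 0)"

lemma vector_space_cscale: "vector_space cscale"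
  by unfold_locales (auto simp: cscale_def fun_eq_iff algebra_simps)

lemma vector_space_ind_scale: "vector_space ind_scale"
  by unfold_locales (auto simp: ind_scale_def cscale_def fun_eq_iff algebra_simps)

end

theory Submission
  imports Defs "HOL-Analysis.Analysis"
begin


lemma sum_fun_apply: "(\<Sum>x\<in>A. F x) t = (\<Sum>x\<in>A. F x t)"
  by (induction A rule: infinite_finite_induct) auto

lemma cinner_add_right: "cinner x (y + z) = cinner x y + cinner x z"
  by (simp add: cinner_def sum.distrib algebra_simps)
lemma cinner_add_left: "cinner (x + y) z = cinner x z + cinner y z"
  by (simp add: cinner_def sum.distrib algebra_simps)
lemma cinner_diff_right: "cinner x (y - z) = cinner x y - cinner x z"
  by (simp add: cinner_def sum_subtractf algebra_simps)
lemma cinner_diff_left: "cinner (x - y) z = cinner x z - cinner y z"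
  by (simp add: cinner_def sum_subtractf algebra_simps)
lemma cinner_scale_right: "cinner x (cscale c y) = c * cinner x y"
  by (simp add: cinner_def cscale_def sum_distrib_left algebra_simps)
lemma cinner_scale_left: "cinner (cscale c x) y = cnj c * cinner x y"
  by (simp add: cinner_def cscale_def sum_distrib_left algebra_simps)
lemma cinner_zero_right[simp]: "cinner x 0 = 0" by (simp add: cinner_def)
lemma cinner_zero_left[simp]: "cinner 0 x = 0" by (simp add: cinner_def)
lemma cinner_cnj: "cnj (cinner x y) = cinner y x"
  by (simp add: cinner_def mult.commute)
lemma cinner_self: "cinner x x = complex_of_real (\<Sum>i\<in>UNIV. (cmod (x i))\<^sup>2)"
  unfolding cinner_def of_real_sum by (intro sum.cong refl) (simp only: complex_norm_square mult.commute)
lemma cinner_self_eq_0: "cinner (x::'n::finite \<Rightarrow> complex) x = 0 \<longleftrightarrow> x = 0"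
proof
  assume "cinner x x = 0"
  then have "complex_of_real (\<Sum>i\<in>UNIV. (cmod (x i))\<^sup>2) = 0" by (simp only: cinner_self)
  then have "(\<Sum>i\<in>UNIV. (cmod (x i))\<^sup>2) = 0" by (simp only: of_real_eq_0_iff)
  then have "\<forall>i\<in>UNIV. (cmod (x i))\<^sup>2 = 0" by (subst (asm) sum_nonneg_eq_0_iff) auto
  then show "x = 0" by (auto simp: fun_eq_iff)
qed simp

lemma ind_inner_add_right: "ind_inner T x (y + z) = ind_inner T x y + ind_inner T x z"
  by (simp add: ind_inner_def cinner_add_right sum.distrib)
lemma ind_inner_add_left: "ind_inner T (x + y) z = ind_inner T x z + ind_inner T y z"
  by (simp add: ind_inner_def cinner_add_left sum.distrib)
lemma ind_inner_diff_right: "ind_inner T x (y - z) = ind_inner T x y - ind_inner T x z"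
  by (simp add: ind_inner_def cinner_diff_right sum_subtractf)
lemma ind_inner_diff_left: "ind_inner T (x - y) z = ind_inner T x z - ind_inner T y z"
  by (simp add: ind_inner_def cinner_diff_left sum_subtractf)
lemma ind_inner_scale_right: "ind_inner T x (ind_scale c y) = c * ind_inner T x y"
  by (simp add: ind_inner_def ind_scale_def cinner_scale_right sum_distrib_left)
lemma ind_inner_scale_left: "ind_inner T (ind_scale c x) y = cnj c * ind_inner T x y"
  by (simp add: ind_inner_def ind_scale_def cinner_scale_left sum_distrib_left)
lemma ind_inner_zero_right[simp]: "ind_inner T x 0 = 0" by (simp add: ind_inner_def)
lemma ind_inner_zero_left[simp]: "ind_inner T 0 x = 0" by (simp add: ind_inner_def)
lemma ind_inner_cnj: "cnj (ind_inner T x y) = ind_inner T y x"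
  by (simp add: ind_inner_def cinner_cnj)
lemma ind_inner_sum_right: "ind_inner T x (\<Sum>u\<in>A. F u) = (\<Sum>u\<in>A. ind_inner T x (F u))"
proof (induction A rule: infinite_finite_induct)
  case (insert a A)
  then show ?case by (simp only: sum.insert[OF insert(1,2)] ind_inner_add_right)
qed (simp_all add: ind_inner_def cinner_def)
lemma ind_inner_sum_left: "ind_inner T (\<Sum>u\<in>A. F u) x = (\<Sum>u\<in>A. ind_inner T (F u) x)"
proof (induction A rule: infinite_finite_induct)
  case (insert a A)
  then show ?case by (simp only: sum.insert[OF insert(1,2)] ind_inner_add_left)
qed (simp_all add: ind_inner_def cinner_def)
lemma ind_inner_self: "ind_inner T x x = complex_of_real (\<Sum>t\<in>T. \<Sum>i\<in>UNIV. (cmod (x t i))\<^sup>2)"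
  unfolding ind_inner_def by (simp only: cinner_self of_real_sum)
lemma ind_inner_self_ge0: "0 \<le> (\<Sum>t\<in>T. \<Sum>i\<in>UNIV. (cmod ((x::'g \<Rightarrow> 'n::finite \<Rightarrow> complex) t i))\<^sup>2)"
  by (intro sum_nonneg) auto
lemma ind_inner_self_eq_0:
  assumes "finite T" "x \<in> ind_space T" "ind_inner T (x::'g \<Rightarrow> 'n::finite \<Rightarrow> complex) x = 0"
  shows "x = 0"
proof -
  have "(\<Sum>t\<in>T. \<Sum>i\<in>UNIV. (cmod (x t i))\<^sup>2) = 0" using assms(3) unfolding ind_inner_self by (simp only: of_real_eq_0_iff)
  then have "\<forall>t\<in>T. (\<Sum>i\<in>UNIV. (cmod (x t i))\<^sup>2) = 0"
    using assms(1) by (subst (asm) sum_nonneg_eq_0_iff) (auto intro: sum_nonneg)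
  then have "\<forall>t\<in>T. \<forall>i. (cmod (x t i))\<^sup>2 = 0"
    by (subst (asm) sum_nonneg_eq_0_iff) auto
  then show ?thesis using assms(2) by (auto simp: fun_eq_iff ind_space_def)
qed

interpretation IS: vector_space ind_scale by (rule vector_space_ind_scale)
interpretation CS: vector_space cscale by (rule vector_space_cscale)

lemma ind_space_subspace: "IS.subspace (ind_space T)"
  by (auto simp: IS.subspace_def ind_space_def ind_scale_def cscale_def fun_eq_iff)

definition orthonormal :: "'g set \<Rightarrow> ('g \<Rightarrow> 'n::finite \<Rightarrow> complex) set \<Rightarrow> bool" where
  "orthonormal T S \<longleftrightarrow> (\<forall>u\<in>S. \<forall>v\<in>S. ind_inner T u v = (if u = v then 1 else 0))"

definition proj :: "'g set \<Rightarrow> ('g \<Rightarrow> 'n::finite \<Rightarrow> complex) set \<Rightarrow> ('g \<Rightarrow> 'n \<Rightarrow> complex) \<Rightarrow> ('g \<Rightarrow> 'n \<Rightarrow> complex)" where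
  "proj T S x = (\<Sum>u\<in>S. ind_scale (ind_inner T u x) u)"

definition nrm2 :: "'g set \<Rightarrow> ('g \<Rightarrow> 'n::finite \<Rightarrow> complex) \<Rightarrow> real" where
  "nrm2 T x = (\<Sum>t\<in>T. \<Sum>i\<in>UNIV. (cmod (x t i))\<^sup>2)"

lemma nrm2_ge0: "0 \<le> nrm2 T x" unfolding nrm2_def by (intro sum_nonneg) auto
lemma inner_self_nrm2: "ind_inner T x x = complex_of_real (nrm2 T x)"
  unfolding nrm2_def by (rule ind_inner_self)

lemma proj_in_span: "proj T S x \<in> IS.span S"
  unfolding proj_def by (intro IS.span_sum IS.span_scale IS.span_base)

lemma inner_proj: "ind_inner T w (proj T S x) = (\<Sum>u\<in>S. ind_inner T u x * ind_inner T w u)"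
  unfolding proj_def by (simp add: ind_inner_sum_right ind_inner_scale_right)

lemma inner_proj_basis:
  assumes "finite S" "orthonormal T S" "u \<in> S"
  shows "ind_inner T u (proj T S x) = ind_inner T u x"
proof -
  have "ind_inner T u (proj T S x) = (\<Sum>v\<in>S. if v = u then ind_inner T v x else 0)"
    unfolding inner_proj using assms(2,3) by (intro sum.cong refl) (auto simp: orthonormal_def)
  also have "\<dots> = ind_inner T u x" using assms(1,3) by simp
  finally show ?thesis .
qed

lemma orth_basis:
  assumes "finite S" "orthonormal T S" "u \<in> S"
  shows "ind_inner T u (x - proj T S x) = 0"
  using inner_proj_basis[OF assms] by (simp add: ind_inner_diff_right)

lemma orth_subspace: "IS.subspace {v. ind_inner T v y = 0}"
  by (auto simp: IS.subspace_def ind_inner_add_left ind_inner_scale_left)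

lemma orth_span:
  assumes "finite S" "orthonormal T S" "v \<in> IS.span S"
  shows "ind_inner T v (x - proj T S x) = 0"
proof -
  have "IS.span S \<subseteq> {v. ind_inner T v (x - proj T S x) = 0}"
    using orth_basis[OF assms(1,2)] by (intro IS.span_minimal orth_subspace) auto
  then show ?thesis using assms(3) by auto
qed

lemma proj_inner_self:
  assumes "finite S" "orthonormal T S"
  shows "ind_inner T (proj T S x) x = complex_of_real (\<Sum>u\<in>S. (cmod (ind_inner T u x))\<^sup>2)"
  unfolding proj_def ind_inner_sum_left ind_inner_scale_left of_real_sum
  by (intro sum.cong refl) (simp only: complex_norm_square mult.commute)

lemma proj_proj_inner:
  assumes "finite S" "orthonormal T S"
  shows "ind_inner T (proj T S x) (proj T S x) = complex_of_real (\<Sum>u\<in>S. (cmod (ind_inner T u x))\<^sup>2)"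
proof -
  have "ind_inner T (proj T S x) (x - proj T S x) = 0"
    by (rule orth_span[OF assms proj_in_span])
  then have "ind_inner T (proj T S x) (proj T S x) = ind_inner T (proj T S x) x"
    by (simp add: ind_inner_diff_right)
  then show ?thesis using proj_inner_self[OF assms] by simp
qed

lemma bessel:
  assumes "finite S" "orthonormal T S"
  shows "(\<Sum>u\<in>S. (cmod (ind_inner T u x))\<^sup>2) \<le> nrm2 T x"
proof -
  let ?p = "proj T S x"
  have o: "ind_inner T ?p (x - ?p) = 0" by (rule orth_span[OF assms proj_in_span])
  have "ind_inner T (x - ?p) (x - ?p) = ind_inner T x (x - ?p)"
    using o by (simp add: ind_inner_diff_left)
  also have "\<dots> = ind_inner T x x - ind_inner T x ?p" by (simp add: ind_inner_diff_right)
  also have "ind_inner T x ?p = cnj (ind_inner T ?p x)" by (simp add: ind_inner_cnj)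
  also have "\<dots> = complex_of_real (\<Sum>u\<in>S. (cmod (ind_inner T u x))\<^sup>2)"
    using proj_inner_self[OF assms] by simp
  finally have c: "ind_inner T (x - ?p) (x - ?p) = ind_inner T x x - complex_of_real (\<Sum>u\<in>S. (cmod (ind_inner T u x))\<^sup>2)" .
  have "complex_of_real (nrm2 T (x - ?p)) = complex_of_real (nrm2 T x - (\<Sum>u\<in>S. (cmod (ind_inner T u x))\<^sup>2))"
    using c by (simp only: inner_self_nrm2 of_real_diff)
  then have "nrm2 T (x - ?p) = nrm2 T x - (\<Sum>u\<in>S. (cmod (ind_inner T u x))\<^sup>2)"
    by (simp only: of_real_eq_iff)
  then show ?thesis using nrm2_ge0[of T "x - ?p"] by linarith
qed

lemma span_ind_space: "S \<subseteq> ind_space T \<Longrightarrow> IS.span S \<subseteq> ind_space T"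
  by (rule IS.span_minimal[OF _ ind_space_subspace])

lemma proj_id:
  assumes "finite S" "orthonormal T S" "S \<subseteq> ind_space T" "finite T" "x \<in> IS.span S"
  shows "proj T S x = x"
proof -
  have d: "x - proj T S x \<in> IS.span S" using assms(5) proj_in_span by (rule IS.span_diff)
  then have "ind_inner T (x - proj T S x) (x - proj T S x) = 0" by (rule orth_span[OF assms(1,2)])
  moreover have "x - proj T S x \<in> ind_space T" using d span_ind_space[OF assms(3)] by auto
  ultimately have "x - proj T S x = 0" using ind_inner_self_eq_0 assms(4) by blast
  then show ?thesis by simp
qed

lemma orthonormal_independent:
  assumes "orthonormal T S"
  shows "IS.independent S"
proof
  assume "IS.dependent S"
  then obtain a where a: "a \<in> S" "a \<in> IS.span (S - {a})" unfolding IS.dependent_def by blast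
  have "IS.span (S - {a}) \<subseteq> {v. ind_inner T v a = 0}"
    using assms a(1) by (intro IS.span_minimal orth_subspace) (auto simp: orthonormal_def)
  then have "ind_inner T a a = 0" using a(2) by auto
  moreover have "ind_inner T a a = 1" using assms a(1) by (auto simp: orthonormal_def)
  ultimately show False by simp
qed

lemma gram_schmidt:
  assumes "finite T" "finite A" "A \<subseteq> ind_space T"
  shows "\<exists>S. finite S \<and> S \<subseteq> ind_space (T::'g set) \<and> orthonormal T (S::('g \<Rightarrow> 'n::finite \<Rightarrow> complex) set) \<and> IS.span S = IS.span A"
  using assms(2,3)
proof (induction A rule: finite_induct)
  case empty
  show ?case by (rule exI[of _ "{}"]) (auto simp: orthonormal_def)
next
  case (insert a A)
  then obtain S where S: "finite S" "S \<subseteq> ind_space T" "orthonormal T S" "IS.span S = IS.span A" by auto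
  have aT: "a \<in> ind_space T" using insert by auto
  define w where "w = a - proj T S a"
  have pS: "proj T S a \<in> IS.span A" using proj_in_span S(4) by metis
  have pT: "proj T S a \<in> ind_space T" using proj_in_span span_ind_space[OF S(2)] by blast
  have wT: "w \<in> ind_space T" unfolding w_def using aT pT ind_space_subspace IS.subspace_diff by blast
  show ?case
  proof (cases "w = 0")
    case True
    then have "a \<in> IS.span A" using pS unfolding w_def by simp
    then have "IS.span (insert a A) = IS.span A" by (rule IS.span_redundant)
    then show ?thesis using S by auto
  next
    case False
    define r where "r = nrm2 T w"
    have "ind_inner T w w \<noteq> 0" using ind_inner_self_eq_0[OF assms(1) wT] False by blast
    then have "r \<noteq> 0" unfolding r_def inner_self_nrm2 by simp
    then have rpos: "r > 0" using nrm2_ge0[of T w] unfolding r_def by linarith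
    define c where "c = complex_of_real (1 / sqrt r)"
    define u where "u = ind_scale c w"
    have uu: "ind_inner T u u = 1"
    proof -
      have "ind_inner T u u = c * (cnj c * ind_inner T w w)"
        by (simp only: u_def ind_inner_scale_left ind_inner_scale_right)
      also have "\<dots> = complex_of_real (1 / sqrt r * (1 / sqrt r) * r)"
        unfolding c_def inner_self_nrm2 r_def[symmetric]
        by (simp only: complex_cnj_complex_of_real of_real_mult mult.assoc)
      also have "1 / sqrt r * (1 / sqrt r) * r = 1" using rpos
        by (simp add: field_simps flip: power2_eq_square)
      finally show ?thesis by simp
    qed
    have su: "ind_inner T s u = 0" if "s \<in> S" for s
      unfolding u_def ind_inner_scale_right w_def using orth_basis[OF S(1,3) that] by simp
    have us: "ind_inner T u s = 0" if "s \<in> S" for s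
      using su[OF that] ind_inner_cnj[of T u s] by (metis complex_cnj_zero_iff)
    have uS: "u \<notin> S" using su uu by force
    have uT: "u \<in> ind_space T" unfolding u_def using wT ind_space_subspace IS.subspace_scale by blast
    have orth: "orthonormal T (insert u S)"
      using S(3) uu su us unfolding orthonormal_def by auto
    have sub1: "IS.span (insert u S) \<subseteq> IS.span (insert a A)"
    proof (rule IS.span_minimal[OF _ IS.subspace_span])
      have "a \<in> IS.span (insert a A)" by (rule IS.span_base) simp
      moreover have "proj T S a \<in> IS.span (insert a A)" using pS IS.span_mono[of A "insert a A"] by blast
      ultimately have "u \<in> IS.span (insert a A)" unfolding u_def w_def
        by (intro IS.span_scale IS.span_diff)
      moreover have "S \<subseteq> IS.span (insert a A)"
        using IS.span_superset[of S] S(4) IS.span_mono[of A "insert a A"] by blast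
      ultimately show "insert u S \<subseteq> IS.span (insert a A)" by blast
    qed
    have sub2: "IS.span (insert a A) \<subseteq> IS.span (insert u S)"
    proof (rule IS.span_minimal[OF _ IS.subspace_span])
      have "ind_scale (complex_of_real (sqrt r)) u = w"
        unfolding u_def c_def using rpos by (simp flip: of_real_mult)
      moreover have "u \<in> IS.span (insert u S)" by (rule IS.span_base) simp
      ultimately have "w \<in> IS.span (insert u S)" using IS.span_scale by metis
      moreover have "proj T S a \<in> IS.span (insert u S)" using proj_in_span IS.span_mono[of S "insert u S"] by blast
      ultimately have "w + proj T S a \<in> IS.span (insert u S)" by (rule IS.span_add)
      then have "a \<in> IS.span (insert u S)" unfolding w_def by simp
      moreover have "A \<subseteq> IS.span (insert u S)"
        using IS.span_superset[of A] S(4) IS.span_mono[of S "insert u S"] by blast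
      ultimately show "insert a A \<subseteq> IS.span (insert u S)" by blast
    qed
    show ?thesis
      by (rule exI[of _ "insert u S"]) (use S uT orth sub1 sub2 in auto)
  qed
qed

definition dl :: "'g \<Rightarrow> ('n \<Rightarrow> complex) \<Rightarrow> ('g \<Rightarrow> 'n \<Rightarrow> complex)" where
  "dl t y = (\<lambda>s. if s = t then y else 0)"
definition ev :: "'n \<Rightarrow> 'n \<Rightarrow> complex" where
  "ev i = (\<lambda>j. if j = i then 1 else 0)"
definition nY :: "('n::finite \<Rightarrow> complex) \<Rightarrow> real" where
  "nY y = (\<Sum>i\<in>UNIV. (cmod (y i))\<^sup>2)"
definition Bstd :: "'g set \<Rightarrow> ('g \<Rightarrow> 'n::finite \<Rightarrow> complex) set" where
  "Bstd T = (\<lambda>(t,i). dl t (ev i)) ` (T \<times> UNIV)"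

lemma nY_ge0: "0 \<le> nY y" unfolding nY_def by (intro sum_nonneg) auto
lemma cinner_self_nY: "cinner y y = complex_of_real (nY y)"
  unfolding nY_def by (rule cinner_self)
lemma nY_eq_0: "nY (y::'n::finite \<Rightarrow> complex) = 0 \<longleftrightarrow> y = 0"
  using cinner_self_eq_0[of y] unfolding cinner_self_nY by simp
lemma nrm2_nY: "nrm2 T x = (\<Sum>t\<in>T. nY (x t))"
  unfolding nrm2_def nY_def ..

lemma inner_dl:
  assumes "finite T" "t \<in> T"
  shows "ind_inner T u (dl t y) = cinner (u t) y"
proof -
  have "ind_inner T u (dl t y) = (\<Sum>s\<in>T. if s = t then cinner (u t) y else 0)"
    unfolding ind_inner_def dl_def by (intro sum.cong refl) auto
  then show ?thesis using assms by simp
qed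

lemma cinner_ev: "cinner y (ev i) = cnj (y i)"
proof -
  have "cinner y (ev i) = (\<Sum>j\<in>UNIV. if j = i then cnj (y i) else 0)"
    unfolding cinner_def ev_def by (intro sum.cong refl) auto
  then show ?thesis by simp
qed

lemma ev_eq: "ev i = ev j \<longleftrightarrow> i = j"
  unfolding ev_def by (metis one_neq_zero)

lemma nY_ev: "nY (ev i) = 1"
  using cinner_ev[of "ev i" i] unfolding cinner_self_nY by (simp add: ev_def)

lemma nY_via_inner:
  assumes "finite T" "t \<in> T"
  shows "nY (w t) = (\<Sum>i\<in>UNIV. (cmod (ind_inner T w (dl t (ev i))))\<^sup>2)"
  unfolding nY_def inner_dl[OF assms] cinner_ev by simp

lemma dl_in_ind_space: "t \<in> T \<Longrightarrow> dl t y \<in> ind_space T"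
  by (auto simp: dl_def ind_space_def)

lemma dl_eq: "dl t (ev i) = dl t' (ev i') \<longleftrightarrow> t = t' \<and> i = i'"
proof
  assume "dl t (ev i) = dl t' (ev i')"
  then have "dl t (ev i) t i = dl t' (ev i') t i" by simp
  then show "t = t' \<and> i = i'" by (auto simp: dl_def ev_def split: if_splits)
qed simp

lemma Bstd_finite: "finite T \<Longrightarrow> finite (Bstd T)"
  unfolding Bstd_def by simp

lemma Bstd_sub: "Bstd T \<subseteq> ind_space T"
  unfolding Bstd_def using dl_in_ind_space by auto

lemma Bstd_orthonormal: "finite T \<Longrightarrow> orthonormal T (Bstd T)"
  unfolding orthonormal_def Bstd_def
  by (auto simp: inner_dl cinner_ev dl_eq) (auto simp: dl_def ev_def)

lemma Bstd_card: "finite T \<Longrightarrow> card (Bstd T :: ('g \<Rightarrow> 'n::finite \<Rightarrow> complex) set) = card T * CARD('n)"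
  unfolding Bstd_def
  by (subst card_image) (auto simp: inj_on_def dl_eq card_cartesian_product)

lemma Bstd_span: "finite (T::'g set) \<Longrightarrow> ind_space T \<subseteq> IS.span (Bstd T :: ('g \<Rightarrow> 'n::finite \<Rightarrow> complex) set)"
proof
  fix f :: "'g \<Rightarrow> 'n::finite \<Rightarrow> complex"
  assume "finite T" "f \<in> ind_space T"
  have "f = (\<Sum>p\<in>T \<times> UNIV. ind_scale (f (fst p) (snd p)) (dl (fst p) (ev (snd p))))"
  proof (intro ext)
    fix s j
    have "(\<Sum>p\<in>T \<times> UNIV. ind_scale (f (fst p) (snd p)) (dl (fst p) (ev (snd p)))) s j
        = (\<Sum>p\<in>T \<times> UNIV. if p = (s, j) then f s j else 0)"
      unfolding sum_fun_apply by (intro sum.cong refl) (auto simp: ind_scale_def cscale_def dl_def ev_def)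
    also have "\<dots> = f s j" using \<open>finite T\<close> \<open>f \<in> ind_space T\<close> by (auto simp: ind_space_def)
    finally show "f s j = (\<Sum>p\<in>T \<times> UNIV. ind_scale (f (fst p) (snd p)) (dl (fst p) (ev (snd p)))) s j" by simp
  qed
  also have "\<dots> \<in> IS.span (Bstd T)"
    by (intro IS.span_sum IS.span_scale IS.span_base) (auto simp: Bstd_def)
  finally show "f \<in> IS.span (Bstd T)" .
qed

lemma dim_ind_space: "finite T \<Longrightarrow> IS.dim (ind_space T :: ('g \<Rightarrow> 'n::finite \<Rightarrow> complex) set) = card T * CARD('n)"
  using IS.basis_card_eq_dim[OF Bstd_sub Bstd_span orthonormal_independent[OF Bstd_orthonormal]] Bstd_card
  by metis

lemma bessel_within:
  assumes "finite S" "orthonormal T S" "finite S'" "orthonormal T S'" "S' \<subseteq> IS.span S"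
  shows "(\<Sum>w\<in>S'. (cmod (ind_inner T w x))\<^sup>2) \<le> (\<Sum>u\<in>S. (cmod (ind_inner T u x))\<^sup>2)"
proof -
  have "(\<Sum>w\<in>S'. (cmod (ind_inner T w x))\<^sup>2) = (\<Sum>w\<in>S'. (cmod (ind_inner T w (proj T S x)))\<^sup>2)"
  proof (intro sum.cong refl)
    fix w assume "w \<in> S'"
    then have "ind_inner T w (x - proj T S x) = 0" using orth_span[OF assms(1,2)] assms(5) by blast
    then show "(cmod (ind_inner T w x))\<^sup>2 = (cmod (ind_inner T w (proj T S x)))\<^sup>2"
      by (simp add: ind_inner_diff_right)
  qed
  also have "\<dots> \<le> nrm2 T (proj T S x)" by (rule bessel[OF assms(3,4)])
  also have "nrm2 T (proj T S x) = (\<Sum>u\<in>S. (cmod (ind_inner T u x))\<^sup>2)"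
    using proj_proj_inner[OF assms(1,2), of x] unfolding inner_self_nrm2 by (simp only: of_real_eq_iff)
  finally show ?thesis .
qed

definition tr :: "('g \<Rightarrow> 'n::finite \<Rightarrow> complex) set \<Rightarrow> 'g \<Rightarrow> real" where
  "tr S t = (\<Sum>u\<in>S. nY (u t))"

lemma tr_via_inner:
  assumes "finite T" "t \<in> T"
  shows "tr S t = (\<Sum>i\<in>UNIV. \<Sum>u\<in>S. (cmod (ind_inner T u (dl t (ev i))))\<^sup>2)"
  unfolding tr_def nY_via_inner[OF assms] by (rule sum.swap)

lemma tr_within:
  assumes "finite S" "orthonormal T S" "finite S'" "orthonormal T S'" "S' \<subseteq> IS.span S"
    "finite T" "t \<in> T"
  shows "tr S' t \<le> tr S t"
  unfolding tr_via_inner[OF assms(6,7)]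
  by (intro sum_mono bessel_within[OF assms(1-5)])

lemma sum_tr:
  assumes "orthonormal T S"
  shows "(\<Sum>t\<in>T. tr S t) = real (card S)"
proof -
  have "(\<Sum>t\<in>T. tr S t) = (\<Sum>u\<in>S. nrm2 T u)"
    unfolding tr_def nrm2_nY by (rule sum.swap)
  also have "\<dots> = (\<Sum>u\<in>S. 1)"
  proof (intro sum.cong refl)
    fix u assume "u \<in> S"
    then have "ind_inner T u u = 1" using assms by (auto simp: orthonormal_def)
    then show "nrm2 T u = 1" unfolding inner_self_nrm2 by simp
  qed
  finally show ?thesis by simp
qed



lemma cinner_sum_left: "cinner (\<Sum>u\<in>A. F u) x = (\<Sum>u\<in>A. cinner (F u) x)"
proof (induction A rule: infinite_finite_induct)
  case (insert a A)
  then show ?case by (simp only: sum.insert[OF insert(1,2)] cinner_add_left)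
qed (simp_all add: cinner_def)

lemma cinner_sum_right: "cinner x (\<Sum>u\<in>A. F u) = (\<Sum>u\<in>A. cinner x (F u))"
proof (induction A rule: infinite_finite_induct)
  case (insert a A)
  then show ?case by (simp only: sum.insert[OF insert(1,2)] cinner_add_right)
qed (simp_all add: cinner_def)

definition Rq :: "'k set \<Rightarrow> ('k \<Rightarrow> 'n::finite \<Rightarrow> complex) \<Rightarrow> ('n \<Rightarrow> complex) \<Rightarrow> real" where
  "Rq S a y = (\<Sum>j\<in>S. (cmod (cinner (a j) y))\<^sup>2)"
definition Mop :: "'k set \<Rightarrow> ('k \<Rightarrow> 'n::finite \<Rightarrow> complex) \<Rightarrow> ('n \<Rightarrow> complex) \<Rightarrow> ('n \<Rightarrow> complex)" where
  "Mop S a y = (\<Sum>j\<in>S. cscale (cinner (a j) y) (a j))"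

lemma cmod_expand:
  "(cmod (\<alpha> + complex_of_real t * \<beta>))\<^sup>2 = (cmod \<alpha>)\<^sup>2 + 2*t*Re(cnj \<alpha> * \<beta>) + t\<^sup>2 * (cmod \<beta>)\<^sup>2"
  by (simp only: cmod_power2) (simp add: power2_eq_square algebra_simps)

lemma nY_expand:
  "nY (y + cscale (complex_of_real t) z) = nY y + 2*t*Re (cinner y z) + t\<^sup>2 * nY z"
  unfolding nY_def cinner_def
  by (simp add: cscale_def cmod_expand sum.distrib sum_distrib_left Re_sum algebra_simps)

lemma Rq_expand:
  "Rq S a (y + cscale (complex_of_real t) z) = Rq S a y + 2*t*(\<Sum>j\<in>S. Re (cnj (cinner (a j) y) * cinner (a j) z)) + t\<^sup>2 * Rq S a z"
  unfolding Rq_def cinner_add_right cinner_scale_right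
  by (simp add: cmod_expand sum.distrib sum_distrib_left algebra_simps)

lemma cinner_Mop_left: "cinner (Mop S a y) z = (\<Sum>j\<in>S. cnj (cinner (a j) y) * cinner (a j) z)"
  unfolding Mop_def cinner_sum_left cinner_scale_left ..

lemma cinner_Mop_right: "cinner y (Mop S a y) = complex_of_real (Rq S a y)"
  unfolding Mop_def cinner_sum_right cinner_scale_right Rq_def of_real_sum
proof (intro sum.cong refl)
  fix j
  have "cinner y (a j) = cnj (cinner (a j) y)" by (simp add: cinner_cnj)
  then show "cinner (a j) y * cinner y (a j) = complex_of_real ((cmod (cinner (a j) y))\<^sup>2)"
    by (simp only: complex_norm_square)
qed

lemma real_quad_zero:
  fixes r C :: real
  assumes "\<And>t. 2*t*r \<le> t\<^sup>2 * C" "r \<ge> 0"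
  shows "r = 0"
proof (rule ccontr)
  assume "r \<noteq> 0"
  then have rp: "r > 0" using assms(2) by simp
  define D where "D = \<bar>C\<bar> + 1"
  have Dp: "D > 0" unfolding D_def by simp
  define t where "t = r / D"
  have "2*t*r \<le> t\<^sup>2 * C" by (rule assms(1))
  then have "2 * r * r * D \<le> r * r * C"
    unfolding t_def using Dp by (simp add: field_simps power2_eq_square)
  then have "2 * D \<le> C" using rp by (simp add: mult.assoc)
  then show False unfolding D_def by (smt (verit))
qed

lemma lagrange_eig:
  assumes bound: "\<And>x. Rq S a x \<le> lam * nY x" and eq: "Rq S a y = lam * nY y"
  shows "Mop S a y = cscale (complex_of_real lam) y"
proof -
  define z where "z = Mop S a y - cscale (complex_of_real lam) y"
  have yz: "cinner y z = 0"
    unfolding z_def cinner_diff_right cinner_scale_right cinner_Mop_right cinner_self_nY eq by simp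
  have zz: "cinner z z = cinner (Mop S a y) z"
    unfolding z_def[of] cinner_diff_left[of "Mop S a y"] cinner_scale_left
    using yz by (simp add: z_def[symmetric])
  define r where "r = (\<Sum>j\<in>S. Re (cnj (cinner (a j) y) * cinner (a j) z))"
  have rz: "r = nY z"
  proof -
    have "complex_of_real (nY z) = (\<Sum>j\<in>S. cnj (cinner (a j) y) * cinner (a j) z)"
      using zz cinner_Mop_left[of S a y z] by (simp add: cinner_self_nY)
    then have "nY z = Re (\<Sum>j\<in>S. cnj (cinner (a j) y) * cinner (a j) z)"
      by (metis Re_complex_of_real)
    then show ?thesis unfolding r_def by (simp add: Re_sum)
  qed
  have "2*t*r \<le> t\<^sup>2 * (lam * nY z - Rq S a z)" for t
  proof -
    have "Rq S a (y + cscale (complex_of_real t) z) \<le> lam * nY (y + cscale (complex_of_real t) z)"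
      by (rule bound)
    then show ?thesis unfolding Rq_expand nY_expand yz r_def[symmetric] eq
      by (simp add: algebra_simps)
  qed
  then have "r = 0" using real_quad_zero[of r] rz nY_ge0 by metis
  then have "z = 0" using rz nY_eq_0 by metis
  then show ?thesis unfolding z_def by simp
qed

lemma norm_vec_nY: "norm (v :: complex ^ 'n) = sqrt (nY (vec_nth v))"
  unfolding norm_vec_def L2_set_def nY_def by simp

lemma Rq_cont: "continuous_on A (\<lambda>v::complex^'n. Rq S a (vec_nth v))"
  unfolding Rq_def cinner_def by (intro continuous_intros)

lemma max_exists:
  "\<exists>y0::'n::finite \<Rightarrow> complex. nY y0 = 1 \<and> (\<forall>x. nY x = 1 \<longrightarrow> Rq S a x \<le> Rq S a y0)"
proof -
  have "sphere (0::complex^'n) 1 \<noteq> {}" by simp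
  then obtain v where v: "v \<in> sphere (0::complex^'n) 1" "\<forall>w\<in>sphere 0 1. Rq S a (vec_nth w) \<le> Rq S a (vec_nth v)"
    using continuous_attains_sup[OF compact_sphere _ Rq_cont] by blast
  show ?thesis
  proof (intro exI conjI allI impI)
    show "nY (vec_nth v) = 1" using v(1) norm_vec_nY[of v] nY_ge0[of "vec_nth v"]
      by (simp add: mem_sphere_0)
    fix x :: "'n \<Rightarrow> complex" assume "nY x = 1"
    moreover have "vec_nth (vec_lambda x) = x" by (simp add: fun_eq_iff)
    ultimately have "vec_lambda x \<in> sphere 0 1" by (simp add: mem_sphere_0 norm_vec_nY)
    then show "Rq S a x \<le> Rq S a (vec_nth v)" using v(2) \<open>vec_nth (vec_lambda x) = x\<close> by fastforce
  qed
qed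

lemma Rq_scale: "Rq S a (cscale c x) = (cmod c)\<^sup>2 * Rq S a x"
  unfolding Rq_def cinner_scale_right by (simp add: norm_mult power_mult_distrib sum_distrib_left)

lemma nY_scale: "nY (cscale c x) = (cmod c)\<^sup>2 * nY x"
  unfolding nY_def cscale_def by (simp add: norm_mult power_mult_distrib sum_distrib_left)

lemma Rq_zero: "Rq S a 0 = 0" unfolding Rq_def by simp

lemma max_bound:
  assumes "nY y0 = 1" "\<forall>x. nY x = 1 \<longrightarrow> Rq S a x \<le> Rq S a y0"
  shows "Rq S a x \<le> Rq S a y0 * nY x"
proof (cases "x = 0")
  case True then show ?thesis by (simp add: Rq_zero nY_def)
next
  case False
  then have np: "nY x > 0" using nY_eq_0 nY_ge0 by (metis less_eq_real_def)
  define c where "c = complex_of_real (1 / sqrt (nY x))"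
  have "cmod c = 1 / sqrt (nY x)" unfolding c_def norm_of_real using np by simp
  then have cc: "(cmod c)\<^sup>2 = 1 / nY x" using np by (simp add: power_divide)
  have "nY (cscale c x) = 1" unfolding nY_scale cc using np by simp
  then have "Rq S a (cscale c x) \<le> Rq S a y0" using assms(2) by blast
  then have "Rq S a x / nY x \<le> Rq S a y0" unfolding Rq_scale cc by simp
  then show ?thesis using np by (simp add: divide_le_eq mult.commute)
qed

lemma Mop_add: "Mop S a (x + y) = Mop S a x + Mop S a y"
  unfolding Mop_def cinner_add_right by (simp add: cscale_def sum.distrib algebra_simps fun_eq_iff sum_fun_apply)

lemma Mop_scale: "Mop S a (cscale c x) = cscale c (Mop S a x)"
  unfolding Mop_def cinner_scale_right by (simp add: cscale_def fun_eq_iff sum_fun_apply sum_distrib_left algebra_simps)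

lemma Mop_zero: "Mop S a 0 = 0"
  unfolding Mop_def by (simp add: cscale_def fun_eq_iff sum_fun_apply)



lemma (in group) cancel1: "x \<in> carrier G \<Longrightarrow> y \<in> carrier G \<Longrightarrow> x \<otimes> (inv x \<otimes> y) = y"
  by (simp add: m_assoc[symmetric])
lemma (in group) cancel2: "x \<in> carrier G \<Longrightarrow> y \<in> carrier G \<Longrightarrow> inv x \<otimes> (x \<otimes> y) = y"
  by (simp add: m_assoc[symmetric])

lemma ex1_two: "\<exists>!x. P x \<Longrightarrow> P a \<Longrightarrow> P b \<Longrightarrow> a = b" by blast

locale setting = group G for G :: "('g, 'b) monoid_scheme" (structure) +
  fixes H :: "'g set" and \<rho> :: "'g \<Rightarrow> ('n::finite \<Rightarrow> complex) \<Rightarrow> ('n \<Rightarrow> complex)" and T :: "'g set"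
  assumes finG: "finite (carrier G)" and sub: "subgroup H G" and ur: "unitary_rep G H \<rho>"
    and lt: "left_transversal G H T"
begin

lemma HG: "H \<subseteq> carrier G" by (rule subgroup.subset[OF sub])
lemma H_inv: "h \<in> H \<Longrightarrow> inv h \<in> H" by (rule subgroup.m_inv_closed[OF sub])
lemma H_one: "\<one> \<in> H" by (rule subgroup.one_closed[OF sub])
lemma H_mult: "h \<in> H \<Longrightarrow> k \<in> H \<Longrightarrow> h \<otimes> k \<in> H" by (rule subgroup.m_closed[OF sub])
lemma H_inv_iff:
  assumes "x \<in> carrier G" shows "inv x \<in> H \<longleftrightarrow> x \<in> H"
proof
  assume "inv x \<in> H"
  then have "inv (inv x) \<in> H" by (rule H_inv)
  then show "x \<in> H" using assms by (simp only: inv_inv)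
next
  assume "x \<in> H" then show "inv x \<in> H" by (rule H_inv)
qed
lemma TG: "T \<subseteq> carrier G" using lt unfolding left_transversal_def by (rule conjunct1)
lemma finT: "finite T" by (rule finite_subset[OF TG finG])
lemma trans_uniq:
  assumes "g \<in> carrier G" shows "\<exists>!t. t \<in> T \<and> inv t \<otimes> g \<in> H"
proof -
  have "\<forall>g\<in>carrier G. \<exists>!t. t \<in> T \<and> inv t \<otimes> g \<in> H"
    using lt unfolding left_transversal_def by (rule conjunct2)
  then show ?thesis using assms by (rule bspec)
qed

lemma rho_lin: "h \<in> H \<Longrightarrow> Vector_Spaces.linear cscale cscale (\<rho> h)"
  using ur unfolding unitary_rep_def by auto
lemma rho_add: "h \<in> H \<Longrightarrow> \<rho> h (x + y) = \<rho> h x + \<rho> h y"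
  using rho_lin unfolding Vector_Spaces.linear_iff by auto
lemma rho_scale: "h \<in> H \<Longrightarrow> \<rho> h (cscale c x) = cscale c (\<rho> h x)"
  using rho_lin unfolding Vector_Spaces.linear_iff by auto
lemma rho_zero: "h \<in> H \<Longrightarrow> \<rho> h 0 = 0"
  using rho_add[of h 0 0] by simp
lemma rho_inner: "h \<in> H \<Longrightarrow> cinner (\<rho> h x) (\<rho> h y) = cinner x y"
  using ur unfolding unitary_rep_def by blast
lemma rho_nY: "h \<in> H \<Longrightarrow> nY (\<rho> h x) = nY x"
  using rho_inner[of h x x] unfolding cinner_self_nY by simp
lemma rho_comp: "h \<in> H \<Longrightarrow> k \<in> H \<Longrightarrow> \<rho> (h \<otimes> k) x = \<rho> h (\<rho> k x)"
  using ur unfolding unitary_rep_def by (metis comp_apply)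

lemma rho_one: "\<rho> \<one> x = x"
proof -
  define z where "z = \<rho> \<one> x - x"
  have "\<rho> \<one> x = \<rho> \<one> (\<rho> \<one> x)" using rho_comp[OF H_one H_one, of x] by simp
  then have "\<rho> \<one> z + \<rho> \<one> x = \<rho> \<one> x"
    unfolding z_def using rho_add[OF H_one, of "\<rho> \<one> x - x" x] by simp
  then have "\<rho> \<one> z = 0" by simp
  then have "nY z = 0" using rho_nY[OF H_one, of z] nY_eq_0 by metis
  then show ?thesis using nY_eq_0[of "\<rho> \<one> x - x"] unfolding z_def by simp
qed

lemma rho_inv: "k \<in> H \<Longrightarrow> \<rho> (inv k) (\<rho> k y) = y"
proof -
  assume k: "k \<in> H"
  then have "inv k \<otimes> k = \<one>" using HG by auto
  then show ?thesis using rho_comp[OF H_inv[OF k] k, of y] rho_one by simp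
qed

lemma t0_exists: "\<exists>t0. t0 \<in> T \<and> t0 \<in> H \<and> (\<forall>t\<in>T. t \<in> H \<longrightarrow> t = t0)"
proof -
  obtain t0 where t0: "t0 \<in> T" "inv t0 \<otimes> \<one> \<in> H" "\<forall>t. t \<in> T \<and> inv t \<otimes> \<one> \<in> H \<longrightarrow> t = t0"
    using trans_uniq[OF one_closed] by blast
  have "t0 \<in> H" using t0(1,2) TG H_inv_iff by auto
  moreover have "\<forall>t\<in>T. t \<in> H \<longrightarrow> t = t0" using t0(3) TG H_inv by auto
  ultimately show ?thesis using t0(1) by blast
qed

lemma cond_equiv:
  assumes "s \<in> carrier G" "g \<in> carrier G" "t \<in> carrier G"
  shows "inv s \<otimes> g \<otimes> t \<in> H \<longleftrightarrow> inv t \<otimes> (inv g \<otimes> s) \<in> H"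
proof -
  have "inv (inv s \<otimes> g \<otimes> t) = inv t \<otimes> (inv g \<otimes> s)"
    using assms by (simp add: inv_mult_group m_assoc)
  moreover have "inv s \<otimes> g \<otimes> t \<in> carrier G" using assms by simp
  ultimately show ?thesis using H_inv_iff[of "inv s \<otimes> g \<otimes> t"] by simp
qed

definition tau :: "'g \<Rightarrow> 'g \<Rightarrow> 'g" where
  "tau g s = (THE t. t \<in> T \<and> inv s \<otimes> g \<otimes> t \<in> H)"

lemma tau_ex1:
  assumes "g \<in> carrier G" "s \<in> T"
  shows "\<exists>!t. t \<in> T \<and> inv s \<otimes> g \<otimes> t \<in> H"
proof -
  have sG: "s \<in> carrier G" using assms TG by auto
  have igs: "inv g \<otimes> s \<in> carrier G" using assms sG by simp
  obtain t where t0: "t \<in> T \<and> inv t \<otimes> (inv g \<otimes> s) \<in> H"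
    and u0: "\<forall>t'. t' \<in> T \<and> inv t' \<otimes> (inv g \<otimes> s) \<in> H \<longrightarrow> t' = t"
    by (rule ex1E[OF trans_uniq[OF igs]])
  have t: "t \<in> T" "inv t \<otimes> (inv g \<otimes> s) \<in> H" using t0 by simp_all
  have u: "\<And>t'. t' \<in> T \<and> inv t' \<otimes> (inv g \<otimes> s) \<in> H \<Longrightarrow> t' = t" using u0 by simp
  have eq: "inv s \<otimes> g \<otimes> t \<in> H \<longleftrightarrow> inv t \<otimes> (inv g \<otimes> s) \<in> H" if "t \<in> T" for t
  proof -
    have "t \<in> carrier G" using TG that by (rule subsetD)
    then show ?thesis by (rule cond_equiv[OF sG assms(1)])
  qed
  show ?thesis
  proof (rule ex1I[of _ t])
    show "t \<in> T \<and> inv s \<otimes> g \<otimes> t \<in> H" using t eq by simp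
    fix t' assume "t' \<in> T \<and> inv s \<otimes> g \<otimes> t' \<in> H"
    then show "t' = t" using u[of t'] eq[of t'] by simp
  qed
qed

lemma tau:
  assumes "g \<in> carrier G" "s \<in> T"
  shows "tau g s \<in> T" "inv s \<otimes> g \<otimes> tau g s \<in> H"
    "\<And>t. t \<in> T \<Longrightarrow> inv s \<otimes> g \<otimes> t \<in> H \<longleftrightarrow> t = tau g s"
proof -
  have th: "tau g s \<in> T \<and> inv s \<otimes> g \<otimes> tau g s \<in> H"
    unfolding tau_def by (rule theI'[OF tau_ex1[OF assms]])
  then show "tau g s \<in> T" "inv s \<otimes> g \<otimes> tau g s \<in> H" by simp_all
  fix t assume "t \<in> T"
  show "inv s \<otimes> g \<otimes> t \<in> H \<longleftrightarrow> t = tau g s"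
  proof
    assume "inv s \<otimes> g \<otimes> t \<in> H"
    then have "(THE t. t \<in> T \<and> inv s \<otimes> g \<otimes> t \<in> H) = t"
      using \<open>t \<in> T\<close> by (intro the1_equality[OF tau_ex1[OF assms]]) simp
    then show "t = tau g s" unfolding tau_def by simp
  next
    assume "t = tau g s" then show "inv s \<otimes> g \<otimes> t \<in> H" using th by simp
  qed
qed

lemma tau_inj:
  assumes "g \<in> carrier G"
  shows "inj_on (tau g) T"
proof
  fix s1 s2 assume s: "s1 \<in> T" "s2 \<in> T" "tau g s1 = tau g s2"
  define t where "t = tau g s1"
  have G: "s1 \<in> carrier G" "s2 \<in> carrier G" "t \<in> carrier G"
    using s TG tau(1)[OF assms s(1)] unfolding t_def by auto
  have a1: "inv s1 \<otimes> g \<otimes> t \<in> H" using tau(2)[OF assms s(1)] unfolding t_def .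
  have a2: "inv s2 \<otimes> g \<otimes> t \<in> H" using tau(2)[OF assms s(2)] s(3) unfolding t_def by simp
  have "(inv s1 \<otimes> g \<otimes> t) \<otimes> inv (inv s2 \<otimes> g \<otimes> t) = inv s1 \<otimes> s2"
    using G assms by (simp add: inv_mult_group m_assoc cancel1)
  then have "inv s1 \<otimes> s2 \<in> H" using H_mult[OF a1 H_inv[OF a2]] by simp
  moreover have "inv s2 \<otimes> s2 \<in> H" using G H_one by simp
  ultimately show "s1 = s2" using ex1_two[OF trans_uniq[OF G(2)], of s1 s2] s(1,2) by simp
qed

lemma tau_bij:
  assumes "g \<in> carrier G"
  shows "tau g ` T = T"
proof -
  have "tau g ` T \<subseteq> T" using tau(1)[OF assms] by auto
  then show ?thesis using endo_inj_surj[OF finT _ tau_inj[OF assms]] by simp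
qed

lemma action_formula:
  assumes "g \<in> carrier G" "s \<in> T"
  shows "ind_action G H \<rho> T g f s = \<rho> (inv s \<otimes> g \<otimes> tau g s) (f (tau g s))"
proof -
  have "ind_action G H \<rho> T g f s = (\<Sum>t\<in>T. if inv s \<otimes> g \<otimes> t \<in> H then \<rho> (inv s \<otimes> g \<otimes> t) (f t) else 0)"
    unfolding ind_action_def using assms(2) by simp
  also have "\<dots> = (\<Sum>t\<in>T. if t = tau g s then \<rho> (inv s \<otimes> g \<otimes> t) (f t) else 0)"
    by (intro sum.cong refl) (simp add: tau(3)[OF assms])
  also have "\<dots> = \<rho> (inv s \<otimes> g \<otimes> tau g s) (f (tau g s))"
    using tau(1)[OF assms] finT by simp
  finally show ?thesis .
qed

lemma action_inner:
  assumes "g \<in> carrier G"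
  shows "ind_inner T (ind_action G H \<rho> T g f) (ind_action G H \<rho> T g f') = ind_inner T f f'"
proof -
  have "ind_inner T (ind_action G H \<rho> T g f) (ind_action G H \<rho> T g f') = (\<Sum>s\<in>T. cinner (f (tau g s)) (f' (tau g s)))"
    unfolding ind_inner_def by (intro sum.cong refl) (simp add: action_formula assms rho_inner tau(2))
  also have "\<dots> = (\<Sum>t\<in>tau g ` T. cinner (f t) (f' t))"
    by (rule sum.reindex[OF tau_inj[OF assms], symmetric, unfolded comp_def])
  also have "\<dots> = ind_inner T f f'" unfolding tau_bij[OF assms] ind_inner_def ..
  finally show ?thesis .
qed

lemma action_shift:
  assumes "s \<in> T" "t \<in> T"
  shows "ind_action G H \<rho> T (s \<otimes> inv t) f s = f t"
proof -
  have G: "s \<in> carrier G" "t \<in> carrier G" using assms TG by auto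
  have g: "s \<otimes> inv t \<in> carrier G" using G by simp
  have e: "inv s \<otimes> (s \<otimes> inv t) \<otimes> t = \<one>" using G by (simp add: m_assoc cancel2)
  have "tau (s \<otimes> inv t) s = t" using tau(3)[OF g assms(1) assms(2)] e H_one by simp
  then show ?thesis using action_formula[OF g assms(1)] e rho_one by simp
qed

lemma action_dl:
  assumes t0: "t0 \<in> T" "t0 \<in> H" "\<forall>t\<in>T. t \<in> H \<longrightarrow> t = t0" and k: "k \<in> H"
    and g_def: "g = t0 \<otimes> k \<otimes> inv t0"
  shows "ind_action G H \<rho> T g (dl t0 y) = dl t0 (\<rho> k y)"
proof
  fix s
  have t0G: "t0 \<in> carrier G" using HG t0(2) by (rule subsetD)
  have kG: "k \<in> carrier G" using HG k by (rule subsetD)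
  have g: "g \<in> carrier G" unfolding g_def using t0G kG by simp
  have e: "inv t0 \<otimes> g \<otimes> t0 = k" unfolding g_def using t0G kG by (simp add: m_assoc cancel2)
  show "ind_action G H \<rho> T g (dl t0 y) s = dl t0 (\<rho> k y) s"
  proof (cases "s \<in> T")
    case False
    then have "s \<noteq> t0" using t0(1) by auto
    then show ?thesis using False unfolding ind_action_def dl_def by simp
  next
    case sT: True
    show ?thesis
    proof (cases "s = t0")
      case True
      have "tau g t0 = t0" using tau(3)[OF g t0(1) t0(1)] e k by simp
      then show ?thesis using action_formula[OF g t0(1)] e True by (simp add: dl_def)
    next
      case False
      have sG: "s \<in> carrier G" using TG sT by (rule subsetD)
      have "tau g s \<noteq> t0"
      proof
        assume "tau g s = t0"
        then have h1: "inv s \<otimes> g \<otimes> t0 \<in> H" using tau(2)[OF g sT] by simp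
        have "inv s \<otimes> g \<otimes> t0 = inv s \<otimes> t0 \<otimes> k"
          unfolding g_def using t0G kG sG by (simp add: m_assoc)
        then have "inv s \<otimes> t0 \<otimes> k \<in> H" using h1 by simp
        then have h2: "inv s \<otimes> t0 \<otimes> k \<otimes> inv k \<in> H" by (rule H_mult[OF _ H_inv[OF k]])
        have "inv s \<otimes> t0 \<otimes> k \<otimes> inv k = inv s \<otimes> t0" using t0G kG sG by (simp add: m_assoc)
        then have "inv s \<otimes> t0 \<in> H" using h2 by simp
        then have h3: "inv s \<otimes> t0 \<otimes> inv t0 \<in> H" by (rule H_mult[OF _ H_inv[OF t0(2)]])
        have "inv s \<otimes> t0 \<otimes> inv t0 = inv s" using t0G sG by (simp add: m_assoc)
        then have "inv s \<in> H" using h3 by simp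
        then have "s \<in> H" using H_inv_iff[OF sG] by simp
        then show False using t0(3) sT False by simp
      qed
      then have "dl t0 y (tau g s) = 0" by (simp add: dl_def)
      then have "ind_action G H \<rho> T g (dl t0 y) s = 0"
        using action_formula[OF g sT] rho_zero[OF tau(2)[OF g sT]] by simp
      then show ?thesis using False by (simp add: dl_def)
    qed
  qed
qed
end



lemma cinner_scale_both: "cinner (cscale c x) (cscale c x) = cnj c * c * cinner x x"
  by (simp add: cinner_scale_left cinner_scale_right)

lemma ind_inner_scale_both: "ind_inner T (ind_scale c x) (ind_scale c y) = cnj c * c * ind_inner T x y"
  by (simp add: ind_inner_scale_left ind_inner_scale_right)

theorem proposition12:
  fixes G :: "('g, 'b) monoid_scheme"
    and H :: "'g set"
    and \<rho> :: "'g \<Rightarrow> ('n::finite \<Rightarrow> complex) \<Rightarrow> ('n \<Rightarrow> complex)"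
    and T :: "'g set"
    and V :: "('g \<Rightarrow> 'n \<Rightarrow> complex) set"
  assumes "group G" and "finite (carrier G)" and "subgroup H G"
    and "unitary_rep G H \<rho>" and "irreducible_rep H \<rho>"
    and "left_transversal G H T"
    and "module.subspace ind_scale V" and "V \<subseteq> ind_space T"
    and "\<forall>g\<in>carrier G. \<forall>f\<in>V. ind_action G H \<rho> T g f \<in> V"
    and "V \<noteq> {0}"
  shows "\<exists>\<psi>\<in>V. ind_inner T \<psi> \<psi> = 1 \<and>
           ind_inner T \<psi> (ind_proj H \<psi>) =
             complex_of_real (real (vector_space.dim ind_scale V)
                              / real (vector_space.dim ind_scale (ind_space T :: ('g \<Rightarrow> 'n \<Rightarrow> complex) set)))"
proof -
  interpret setting G H \<rho> T
    by (intro setting.intro setting_axioms.intro) (fact assms)+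
  note Vsub = assms(7) and VT = assms(8) and Vinv = assms(9) and Vne = assms(10)
  obtain t0 where t0all: "t0 \<in> T \<and> t0 \<in> H \<and> (\<forall>t\<in>T. t \<in> H \<longrightarrow> t = t0)"
    using t0_exists by (rule exE)
  have t0: "t0 \<in> T" "t0 \<in> H" "\<forall>t\<in>T. t \<in> H \<longrightarrow> t = t0" using t0all by simp_all
  obtain B where B: "B \<subseteq> V" "IS.independent B" "V \<subseteq> IS.span B" "card B = IS.dim V"
    by (rule IS.basis_exists)
  have BT: "B \<subseteq> ind_space T" using B(1) VT by simp
  have "B \<subseteq> IS.span (Bstd T)" using BT Bstd_span[OF finT] by (rule subset_trans)
  then have finB: "finite B" using IS.independent_span_bound[OF Bstd_finite[OF finT] B(2)] by simp
  obtain S where S: "finite S" "S \<subseteq> ind_space T" "orthonormal T S" "IS.span S = IS.span B"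
    using gram_schmidt[OF finT finB BT] by (elim exE conjE)
  have spanB: "IS.span B = V" by (rule IS.span_subspace[OF B(1) B(3) Vsub])
  have spanV: "IS.span S = V" using S(4) spanB by simp
  have SV: "S \<subseteq> V" using IS.span_superset[of S] spanV by simp
  have kdim: "card S = IS.dim V"
    using IS.basis_card_eq_dim[OF SV _ orthonormal_independent[OF S(3)]] spanV by simp
  have Sne: "S \<noteq> {}"
  proof
    assume "S = {}"
    then have "V = {0}" using spanV IS.span_empty by simp
    then show False using Vne by simp
  qed
  have kpos: "card S > 0" using S(1) Sne by (simp add: card_gt_0_iff)
  have img: "finite (ind_action G H \<rho> T g ` S) \<and> orthonormal T (ind_action G H \<rho> T g ` S)
      \<and> ind_action G H \<rho> T g ` S \<subseteq> IS.span S \<and> inj_on (ind_action G H \<rho> T g) S"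
    if g: "g \<in> carrier G" for g
  proof -
    let ?U = "ind_action G H \<rho> T g"
    have inj: "inj_on ?U S"
    proof
      fix u v assume uv: "u \<in> S" "v \<in> S" "?U u = ?U v"
      have "ind_inner T u v = ind_inner T (?U u) (?U v)" by (simp add: action_inner[OF g])
      also have "\<dots> = ind_inner T (?U u) (?U u)" using uv(3) by simp
      also have "\<dots> = 1" using S(3) uv(1) by (simp add: action_inner[OF g] orthonormal_def)
      finally show "u = v" using S(3) uv(1,2) unfolding orthonormal_def by (auto split: if_splits)
    qed
    have on: "orthonormal T (?U ` S)"
      unfolding orthonormal_def
    proof (intro ballI)
      fix x y assume "x \<in> ?U ` S" "y \<in> ?U ` S"
      then obtain u v where uv: "u \<in> S" "v \<in> S" "x = ?U u" "y = ?U v" by blast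
      have "(x = y) = (u = v)" using inj_on_eq_iff[OF inj uv(1,2)] uv(3,4) by simp
      moreover have "ind_inner T x y = ind_inner T u v" using uv(3,4) by (simp add: action_inner[OF g])
      ultimately show "ind_inner T x y = (if x = y then 1 else 0)"
        using S(3) uv(1,2) unfolding orthonormal_def by simp
    qed
    have "?U ` S \<subseteq> V" using SV Vinv g by auto
    then show ?thesis using on inj S(1) spanV by simp
  qed
  have trle: "tr S t \<le> tr S s" if st: "s \<in> T" "t \<in> T" for s t
  proof -
    have sG: "s \<in> carrier G" "t \<in> carrier G" using TG st by auto
    define g where "g = s \<otimes>\<^bsub>G\<^esub> inv\<^bsub>G\<^esub> t"
    have g: "g \<in> carrier G" unfolding g_def using sG by simp
    let ?U = "ind_action G H \<rho> T g"
    have "tr S t = (\<Sum>u\<in>S. nY (?U u s))"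
      unfolding tr_def g_def using action_shift[OF st] by simp
    also have "\<dots> = tr (?U ` S) s"
      unfolding tr_def using img[OF g] by (simp add: sum.reindex)
    also have "\<dots> \<le> tr S s"
      using img[OF g] by (intro tr_within[OF S(1,3) _ _ _ finT st(1)]) simp_all
    finally show ?thesis .
  qed
  have treq: "tr S t = tr S t0" if "t \<in> T" for t
    using trle[OF that t0(1)] trle[OF t0(1) that] by simp
  have "(\<Sum>t\<in>T. tr S t) = real (card S)" by (rule sum_tr[OF S(3)])
  then have trk: "real (card T) * tr S t0 = real (card S)" using treq by simp
  \<comment> \<open>Schur\<close>
  define a where "a = (\<lambda>u::'g \<Rightarrow> 'n \<Rightarrow> complex. u t0)"
  have Rq_inner: "Rq S a y = (\<Sum>u\<in>S. (cmod (ind_inner T u (dl t0 y)))\<^sup>2)" for y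
    unfolding Rq_def a_def by (simp only: inner_dl[OF finT t0(1)])
  have inv1: "Rq S a y \<le> Rq S a (\<rho> k y)" if k: "k \<in> H" for k y
  proof -
    have kG: "k \<in> carrier G" "t0 \<in> carrier G" using HG k t0(2) by auto
    define g where "g = t0 \<otimes>\<^bsub>G\<^esub> k \<otimes>\<^bsub>G\<^esub> inv\<^bsub>G\<^esub> t0"
    have g: "g \<in> carrier G" unfolding g_def using kG by simp
    let ?U = "ind_action G H \<rho> T g"
    have "Rq S a y = (\<Sum>u\<in>S. (cmod (ind_inner T (?U u) (?U (dl t0 y))))\<^sup>2)"
      unfolding Rq_inner by (simp add: action_inner[OF g])
    also have "\<dots> = (\<Sum>u\<in>S. (cmod (ind_inner T (?U u) (dl t0 (\<rho> k y))))\<^sup>2)"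
      using action_dl[OF t0 k g_def] by simp
    also have "\<dots> = (\<Sum>w\<in>?U ` S. (cmod (ind_inner T w (dl t0 (\<rho> k y))))\<^sup>2)"
      using img[OF g] by (simp add: sum.reindex)
    also have "\<dots> \<le> (\<Sum>u\<in>S. (cmod (ind_inner T u (dl t0 (\<rho> k y))))\<^sup>2)"
      using img[OF g] by (intro bessel_within[OF S(1,3)]) simp_all
    also have "\<dots> = Rq S a (\<rho> k y)" unfolding Rq_inner ..
    finally show ?thesis .
  qed
  have inv2: "Rq S a (\<rho> k y) = Rq S a y" if k: "k \<in> H" for k y
    using inv1[OF k, of y] inv1[OF H_inv[OF k], of "\<rho> k y"] rho_inv[OF k] by simp
  obtain y0 where y0: "nY y0 = 1" "\<forall>x. nY x = 1 \<longrightarrow> Rq S a x \<le> Rq S a y0"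
    using max_exists[of S a] by (elim exE conjE)
  define lam where "lam = Rq S a y0"
  have bound: "Rq S a x \<le> lam * nY x" for x
    unfolding lam_def using max_bound[OF y0] by (simp add: mult.commute)
  define W where "W = {y. Mop S a y = cscale (complex_of_real lam) y}"
  have RqW: "Rq S a y = lam * nY y" if "y \<in> W" for y
  proof -
    have "complex_of_real (Rq S a y) = cinner y (Mop S a y)" by (simp add: cinner_Mop_right)
    also have "\<dots> = complex_of_real (lam * nY y)"
      using that unfolding W_def by (simp add: cinner_scale_right cinner_self_nY)
    finally show ?thesis by (simp only: of_real_eq_iff)
  qed
  have Wsub: "CS.subspace W"
  proof (rule CS.subspaceI)
    show "0 \<in> W" unfolding W_def by (simp add: Mop_zero cscale_def fun_eq_iff)
    fix x y assume "x \<in> W" "y \<in> W"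
    then show "x + y \<in> W" unfolding W_def by (simp add: Mop_add) (simp add: cscale_def fun_eq_iff algebra_simps)
  next
    fix c x assume "x \<in> W"
    then show "cscale c x \<in> W" unfolding W_def by (simp add: Mop_scale)
  qed
  have Winv: "\<forall>h\<in>H. \<forall>y\<in>W. \<rho> h y \<in> W"
  proof (intro ballI)
    fix h y assume h: "h \<in> H" and y: "y \<in> W"
    have "Rq S a (\<rho> h y) = lam * nY (\<rho> h y)" using inv2[OF h] RqW[OF y] rho_nY[OF h] by simp
    then show "\<rho> h y \<in> W" unfolding W_def using lagrange_eig[OF bound] by simp
  qed
  have y0W: "y0 \<in> W" unfolding W_def using lagrange_eig[OF bound, of y0] y0(1) lam_def by simp
  have "y0 \<noteq> 0" using y0(1) nY_eq_0 by force
  then have "W \<noteq> {0}" using y0W by auto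
  then have WU: "W = UNIV" using assms(5) Wsub Winv unfolding irreducible_rep_def by blast
  then have RqAll: "Rq S a y = lam * nY y" for y using RqW by simp
  have MopAll: "Mop S a y = cscale (complex_of_real lam) y" for y using WU unfolding W_def by auto
  have "(\<Sum>i\<in>UNIV. Rq S a (ev i)) = tr S t0"
  proof -
    have "(\<Sum>i\<in>UNIV. Rq S a (ev i)) = (\<Sum>i\<in>UNIV. \<Sum>u\<in>S. (cmod (u t0 i))\<^sup>2)"
      unfolding Rq_def a_def cinner_ev by simp
    also have "\<dots> = tr S t0" unfolding tr_def nY_def by (rule sum.swap)
    finally show ?thesis .
  qed
  then have "real CARD('n) * lam = tr S t0" by (simp add: RqAll nY_ev)
  moreover have "lam * (real (card T) * real CARD('n)) = real (card T) * (real CARD('n) * lam)"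
    by (simp add: algebra_simps)
  ultimately have lamv: "lam * (real (card T) * real CARD('n)) = real (card S)" using trk by simp
  have cardT: "card T > 0"
    using t0(1) finT by (auto simp: card_gt_0_iff)
  have lamq: "lam = real (IS.dim V) / real (IS.dim (ind_space T :: ('g \<Rightarrow> 'n \<Rightarrow> complex) set))"
    unfolding dim_ind_space[OF finT] kdim[symmetric] using lamv cardT
    by (simp add: field_simps)
  have lampos: "lam > 0"
  proof -
    have X: "real (card T) * real CARD('n) > 0" using cardT by simp
    have "lam * (real (card T) * real CARD('n)) > 0" using lamv kpos by simp
    then show ?thesis using X by (simp add: zero_less_mult_iff)
  qed
  define e :: "'n \<Rightarrow> complex" where "e = ev undefined"
  define p where "p = proj T S (dl t0 e)"
  have pV: "p \<in> V" unfolding p_def using proj_in_span spanV by blast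
  have pp: "ind_inner T p p = complex_of_real lam"
    unfolding p_def proj_proj_inner[OF S(1,3)] Rq_inner[symmetric] RqAll e_def nY_ev by simp
  have pt0: "p t0 = cscale (complex_of_real lam) e"
  proof -
    have "p t0 = (\<Sum>u\<in>S. cscale (ind_inner T u (dl t0 e)) (u t0))"
      unfolding p_def proj_def by (simp only: sum_fun_apply[of _ S t0] ind_scale_def)
    also have "\<dots> = Mop S a e"
      unfolding Mop_def a_def by (simp only: inner_dl[OF finT t0(1)])
    finally have "p t0 = Mop S a e" .
    then show ?thesis using MopAll by simp
  qed
  have pE: "ind_inner T p (ind_proj H p) = complex_of_real (lam * lam)"
  proof -
    have "ind_inner T p (ind_proj H p) = (\<Sum>t\<in>T. if t = t0 then cinner (p t0) (p t0) else 0)"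
      unfolding ind_inner_def ind_proj_def
    proof (intro sum.cong refl)
      fix t assume tT: "t \<in> T"
      show "cinner (p t) (if t \<in> H then p t else 0) = (if t = t0 then cinner (p t0) (p t0) else 0)"
      proof (cases "t = t0")
        case True then show ?thesis using t0(2) by simp
      next
        case False
        then have "t \<notin> H" using t0(3) tT by blast
        then show ?thesis using False by (simp only: if_False cinner_zero_right)
      qed
    qed
    also have "\<dots> = cinner (p t0) (p t0)" using finT t0(1) by simp
    also have "\<dots> = complex_of_real (lam * lam)"
      unfolding pt0 cinner_scale_both unfolding cinner_self_nY e_def nY_ev by simp
    finally show ?thesis .
  qed
  define c where "c = complex_of_real (1 / sqrt lam)"
  define \<psi> where "\<psi> = ind_scale c p"
  have r1: "1 / sqrt lam * (1 / sqrt lam) * lam = 1" using lampos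
    by (simp add: field_simps flip: power2_eq_square)
  have cc: "cnj c * c = complex_of_real (1 / sqrt lam * (1 / sqrt lam))"
    unfolding c_def by (simp only: complex_cnj_complex_of_real of_real_mult)
  have psiV: "\<psi> \<in> V" unfolding \<psi>_def using pV Vsub IS.subspace_scale by blast
  have projscale: "ind_proj H \<psi> = ind_scale c (ind_proj H p)"
    unfolding \<psi>_def by (simp add: ind_proj_def ind_scale_def cscale_def fun_eq_iff)
  have n1: "ind_inner T \<psi> \<psi> = 1"
  proof -
    have "ind_inner T \<psi> \<psi> = cnj c * c * ind_inner T p p"
      unfolding \<psi>_def by (rule ind_inner_scale_both)
    also have "\<dots> = complex_of_real (1 / sqrt lam * (1 / sqrt lam) * lam)"
      unfolding cc pp by (simp only: of_real_mult)
    finally show ?thesis unfolding r1 by simp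
  qed
  have n2: "ind_inner T \<psi> (ind_proj H \<psi>) = complex_of_real lam"
  proof -
    have "ind_inner T \<psi> (ind_proj H \<psi>) = cnj c * c * ind_inner T p (ind_proj H p)"
      unfolding projscale unfolding \<psi>_def by (rule ind_inner_scale_both)
    also have "\<dots> = complex_of_real (1 / sqrt lam * (1 / sqrt lam) * lam * lam)"
      unfolding cc pE by (simp only: of_real_mult mult.assoc)
    finally show ?thesis unfolding r1 by simp
  qed
  show ?thesis using psiV n1 n2 lamq by blast
qed

end
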